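(* Let $G=(U\sqcup V,E)$ be a bipartite graph with integer weights $w:E\to\mathbb{Z}$ having a perfect matching, and let $n=|U|=|V|$. Let $0<\epsilon\le 1/(n+1)$, let $M$ be a perfect matching of $G$ and let $\pi_\epsilon:U\to\mathbb{R}$, $p_\epsilon:V\to\mathbb{R}$ satisfy $\pi_\epsilon(u)+p_\epsilon(v)\le w(uv)+\epsilon$ for all $uv\in E$ and $\pi_\epsilon(u)+p_\epsilon(v)=w(uv)$ for all $uv\in M$. Let $t\in\{0,1,\ldots,n\}$ be any integer such that \[ t\neq \big\lceil (n+1)(\lceil p_\epsilon(v)\rceil-p_\epsilon(v))\big\rceil \bmod (n+1)\quad\text{for all } v\in V \] (such $t$ exists). Define $p(v)=\lfloor p_\epsilon(v)+t/(n+1)\rfloor$ for all $v\in V$ and $\pi(u)=w(uv)-p(v)$ for each $uv\in M$. Then $P=(\pi,p)$ is an optimal solution of the dual assignment program \[ \max \sum_{u\in U}\pi(u)+\sum_{v\in V}p(v)\quad\text{subject to}\quad \pi(u)+p(v)\le w(uv)\ \ \forall uv\in E . \]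
   Context: A matching is a set of pairwise vertex-disjoint edges; it is perfect if it covers all vertices. The dual assignment program above is the linear-programming dual of the assignment (minimum weight perfect matching) linear program $\min\sum_{uv\in E}x(uv)w(uv)$ subject to $\sum_{v:uv\in E}x(uv)=1$ for all $u\in U$, $\sum_{u:uv\in E}x(uv)=1$ for all $v\in V$, $x\ge0$. *)

theory Defs
  imports Main "HOL-Library.Disjoint_Sets" Complex_Main
begin

text \<open>Bipartite graph with sides U (type 'u) and V (type 'v), edge set E \<subseteq> U \<times> V.
  The sides are disjoint automatically since they live in different types.\<close>

definition bipartite_graph :: "'u set \<Rightarrow> 'v set \<Rightarrow> ('u \<times> 'v) set \<Rightarrow> bool" where
  "bipartite_graph U V E \<longleftrightarrow> finite U \<and> finite V \<and> E \<subseteq> U \<times> V"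

definition perfect_matching :: "'u set \<Rightarrow> 'v set \<Rightarrow> ('u \<times> 'v) set \<Rightarrow> ('u \<times> 'v) set \<Rightarrow> bool" where
  "perfect_matching U V E M \<longleftrightarrow>
     M \<subseteq> E \<and>
     (\<forall>e\<in>M. \<forall>e'\<in>M. e \<noteq> e' \<longrightarrow> fst e \<noteq> fst e' \<and> snd e \<noteq> snd e') \<and>
     (\<forall>u\<in>U. \<exists>v. (u, v) \<in> M) \<and>
     (\<forall>v\<in>V. \<exists>u. (u, v) \<in> M)"

definition dual_feasible ::
  "('u \<times> 'v) set \<Rightarrow> ('u \<Rightarrow> 'v \<Rightarrow> int) \<Rightarrow> ('u \<Rightarrow> real) \<Rightarrow> ('v \<Rightarrow> real) \<Rightarrow> bool" where
  "dual_feasible E w \<pi> p \<longleftrightarrow> (\<forall>(u, v)\<in>E. \<pi> u + p v \<le> real_of_int (w u v))"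

definition dual_objective :: "'u set \<Rightarrow> 'v set \<Rightarrow> ('u \<Rightarrow> real) \<Rightarrow> ('v \<Rightarrow> real) \<Rightarrow> real" where
  "dual_objective U V \<pi> p = (\<Sum>u\<in>U. \<pi> u) + (\<Sum>v\<in>V. p v)"

definition dual_optimal ::
  "'u set \<Rightarrow> 'v set \<Rightarrow> ('u \<times> 'v) set \<Rightarrow> ('u \<Rightarrow> 'v \<Rightarrow> int) \<Rightarrow> ('u \<Rightarrow> real) \<Rightarrow> ('v \<Rightarrow> real) \<Rightarrow> bool" where
  "dual_optimal U V E w \<pi> p \<longleftrightarrow>
     dual_feasible E w \<pi> p \<and>
     (\<forall>\<pi>' p'. dual_feasible E w \<pi>' p' \<longrightarrow> dual_objective U V \<pi>' p' \<le> dual_objective U V \<pi> p)"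

end

theory Submission
  imports Defs
begin

lemma frac_bound:
  fixes x :: real and N :: nat and t :: int
  assumes tr: "t \<in> {0..int N}"
    and ta: "t \<noteq> \<lceil>(real N + 1) * (real_of_int \<lceil>x\<rceil> - x)\<rceil> mod (int N + 1)"
  shows "x + real_of_int t / (real N + 1) - real_of_int \<lfloor>x + real_of_int t / (real N + 1)\<rfloor> \<ge> 1 / (real N + 1)"
proof (rule ccontr)
  define a where "a = x + real_of_int t / (real N + 1)"
  define F where "F = \<lfloor>a\<rfloor>"
  define m where "m = \<lceil>x\<rceil> - F"
  define y where "y = (real N + 1) * (real_of_int \<lceil>x\<rceil> - x)"
  assume "\<not> ?thesis"
  hence lt: "a - F < 1 / (real N + 1)" unfolding a_def F_def by simp
  have ge: "a - F \<ge> 0" unfolding F_def by simp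
  have pos: "real N + 1 > 0" by simp
  have eq: "(real N + 1) * (a - F) = t - y + (real N + 1) * m"
    unfolding a_def y_def m_def using pos by (simp add: field_simps)
  have lt2: "(real N + 1) * (a - F) < 1" using lt pos by (simp add: field_simps)
  have ge2: "(real N + 1) * (a - F) \<ge> 0" using ge pos by simp
  have "\<lceil>y\<rceil> = t + (int N + 1) * m"
    apply (rule ceiling_unique) using eq lt2 ge2 by auto
  hence "\<lceil>y\<rceil> mod (int N + 1) = t mod (int N + 1)" by simp
  also have "\<dots> = t" using tr by (simp add: mod_pos_pos_trivial)
  finally show False using ta unfolding y_def by simp
qed

theorem proposition2p8:
  fixes U :: "'u set" and V :: "'v set" and E :: "('u \<times> 'v) set"
    and w :: "'u \<Rightarrow> 'v \<Rightarrow> int" and M :: "('u \<times> 'v) set"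
    and n :: nat and \<epsilon> :: real
    and \<pi>\<epsilon> :: "'u \<Rightarrow> real" and p\<epsilon> :: "'v \<Rightarrow> real"
    and t :: int and p :: "'v \<Rightarrow> int" and \<pi> :: "'u \<Rightarrow> int"
  assumes G: "bipartite_graph U V E"
    and has_pm: "\<exists>M0. perfect_matching U V E M0"
    and n_def: "n = card U" and nV: "card V = n"
    and eps_pos: "0 < \<epsilon>" and eps_le: "\<epsilon> \<le> 1 / (real n + 1)"
    and M: "perfect_matching U V E M"
    and approx: "\<forall>(u, v)\<in>E. \<pi>\<epsilon> u + p\<epsilon> v \<le> real_of_int (w u v) + \<epsilon>"
    and tight: "\<forall>(u, v)\<in>M. \<pi>\<epsilon> u + p\<epsilon> v = real_of_int (w u v)"
    and t_range: "t \<in> {0..int n}"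
    and t_avoid: "\<forall>v\<in>V. t \<noteq>
        \<lceil>(real n + 1) * (real_of_int \<lceil>p\<epsilon> v\<rceil> - p\<epsilon> v)\<rceil> mod (int n + 1)"
    and p_def: "\<forall>v\<in>V. p v = \<lfloor>p\<epsilon> v + real_of_int t / (real n + 1)\<rfloor>"
    and \<pi>_def: "\<forall>(u, v)\<in>M. \<pi> u = w u v - p v"
  shows "dual_optimal U V E w (\<lambda>u. real_of_int (\<pi> u)) (\<lambda>v. real_of_int (p v))"
proof -
  have EUV: "E \<subseteq> U \<times> V" and fU: "finite U" and fV: "finite V"
    using G unfolding bipartite_graph_def by auto
  have ME: "M \<subseteq> E" and disj: "\<forall>e\<in>M. \<forall>e'\<in>M. e \<noteq> e' \<longrightarrow> fst e \<noteq> fst e' \<and> snd e \<noteq> snd e'"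
    and covU: "\<forall>u\<in>U. \<exists>v. (u, v) \<in> M" and covV: "\<forall>v\<in>V. \<exists>u. (u, v) \<in> M"
    using M unfolding perfect_matching_def by auto
  define a where "a v = p\<epsilon> v + real_of_int t / (real n + 1)" for v
  have fr: "a v - real_of_int (p v) \<ge> \<epsilon>" if "v \<in> V" for v
  proof -
    have "a v - real_of_int (p v) \<ge> 1 / (real n + 1)"
      using frac_bound[OF t_range, of "p\<epsilon> v"] t_avoid p_def that unfolding a_def by auto
    thus ?thesis using eps_le by linarith
  qed
  have flo: "a v < real_of_int (p v) + 1" if "v \<in> V" for v
    using p_def that unfolding a_def by (simp add: floor_less_iff)
  have feas: "dual_feasible E w (\<lambda>u. real_of_int (\<pi> u)) (\<lambda>v. real_of_int (p v))"
    unfolding dual_feasible_def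
  proof (clarify)
    fix u v assume uv: "(u, v) \<in> E"
    hence uU: "u \<in> U" and vV: "v \<in> V" using EUV by auto
    obtain v' where uv': "(u, v') \<in> M" using covU uU by blast
    hence v'V: "v' \<in> V" using ME EUV by auto
    have pu: "\<pi> u = w u v' - p v'" using \<pi>_def uv' by auto
    have t1: "\<pi>\<epsilon> u + p\<epsilon> v' = real_of_int (w u v')" using tight uv' by auto
    have a1: "\<pi>\<epsilon> u + p\<epsilon> v \<le> real_of_int (w u v) + \<epsilon>" using approx uv by auto
    have "a v - a v' \<le> real_of_int (w u v) - real_of_int (w u v') + \<epsilon>"
      using t1 a1 unfolding a_def by linarith
    hence "real_of_int (p v) < real_of_int (p v') + 1 + real_of_int (w u v) - real_of_int (w u v')"
      using fr[OF vV] flo[OF v'V] by linarith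
    hence "p v < p v' + 1 + w u v - w u v'" by linarith
    hence "\<pi> u + p v \<le> w u v" using pu by linarith
    thus "real_of_int (\<pi> u) + real_of_int (p v) \<le> real_of_int (w u v)" by linarith
  qed
  have fM: "finite M" using ME EUV fU fV by (meson finite_SigmaI finite_subset)
  have injf: "inj_on fst M" using disj unfolding inj_on_def by blast
  have injs: "inj_on snd M" using disj unfolding inj_on_def by blast
  have imf: "fst ` M = U" using ME EUV covU by force
  have ims: "snd ` M = V" using ME EUV covV by force
  have obj: "dual_objective U V f g = (\<Sum>e\<in>M. f (fst e) + g (snd e))" for f :: "'u \<Rightarrow> real" and g :: "'v \<Rightarrow> real"
  proof -
    have "(\<Sum>u\<in>U. f u) = (\<Sum>e\<in>M. f (fst e))"
      using sum.reindex[OF injf, of f] imf by simp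
    moreover have "(\<Sum>v\<in>V. g v) = (\<Sum>e\<in>M. g (snd e))"
      using sum.reindex[OF injs, of g] ims by simp
    ultimately show ?thesis unfolding dual_objective_def by (simp add: sum.distrib)
  qed
  show ?thesis unfolding dual_optimal_def
  proof (intro conjI allI impI feas)
    fix \<pi>' p' assume f': "dual_feasible E w \<pi>' p'"
    have "(\<Sum>e\<in>M. \<pi>' (fst e) + p' (snd e)) \<le> (\<Sum>e\<in>M. real_of_int (\<pi> (fst e)) + real_of_int (p (snd e)))"
    proof (rule sum_mono)
      fix e assume eM: "e \<in> M"
      obtain u v where e: "e = (u, v)" by fastforce
      have "\<pi>' u + p' v \<le> real_of_int (w u v)" using f' eM ME e unfolding dual_feasible_def by auto
      moreover have "\<pi> u = w u v - p v" using \<pi>_def eM e by auto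
      ultimately show "\<pi>' (fst e) + p' (snd e) \<le> real_of_int (\<pi> (fst e)) + real_of_int (p (snd e))"
        using e by simp
    qed
    thus "dual_objective U V \<pi>' p' \<le> dual_objective U V (\<lambda>u. real_of_int (\<pi> u)) (\<lambda>v. real_of_int (p v))"
      using obj by simp
  qed
qed

end
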